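(* Let $d\ge7$, $\epsilon>0$ and $\Delta\ge\sqrt d\,\epsilon$. Let $\Gamma\subseteq\{-1,1\}^{d-1}$ be a set such that any two distinct $x,y\in\Gamma$ satisfy $\sum_{j=1}^{d-1}\mathbf 1\{x_j\ne y_j\}>\frac{d-1}4$, and define \[ \Theta=\{(\Delta,\epsilon u_1,\dots,\epsilon u_{d-1}):(u_1,\dots,u_{d-1})\in\Gamma\}\subset\mathbb R^d. \] Then for all $\theta\ne\theta'\in\Theta$, the internal angle satisfies \[ \frac{\sqrt{d-1}\,\epsilon}{2\Delta}\le\angle(\theta,\theta')\le\frac\pi2. \]
   Context: For nonzero $\theta,\theta'\in\mathbb R^d$, the internal angle is $\angle(\theta,\theta')=\arccos\big(\langle\theta,\theta'\rangle/(\|\theta\|\|\theta'\|)\big)\in[0,\pi]$, with the Euclidean inner product and norm. *)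

theory Defs
  imports "HOL-Analysis.Analysis"
begin

text \<open>Vectors of R^n are represented as functions nat => real, with coordinates
  indexed by {0..<n} (values outside are irrelevant / taken to be 0).\<close>

definition inner_n :: "nat \<Rightarrow> (nat \<Rightarrow> real) \<Rightarrow> (nat \<Rightarrow> real) \<Rightarrow> real" where
  "inner_n n x y = (\<Sum>i<n. x i * y i)"

definition norm_n :: "nat \<Rightarrow> (nat \<Rightarrow> real) \<Rightarrow> real" where
  "norm_n n x = sqrt (inner_n n x x)"

definition angle_n :: "nat \<Rightarrow> (nat \<Rightarrow> real) \<Rightarrow> (nat \<Rightarrow> real) \<Rightarrow> real" where
  "angle_n n x y = arccos (inner_n n x y / (norm_n n x * norm_n n y))"

definition hypercube :: "nat \<Rightarrow> (nat \<Rightarrow> real) set" where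
  "hypercube m = {u. (\<forall>j<m. u j = 1 \<or> u j = -1) \<and> (\<forall>j\<ge>m. u j = 0)}"

definition hamming :: "nat \<Rightarrow> (nat \<Rightarrow> real) \<Rightarrow> (nat \<Rightarrow> real) \<Rightarrow> nat" where
  "hamming m x y = card {j. j < m \<and> x j \<noteq> y j}"

text \<open>The point (Delta, eps u_1, ..., eps u_{d-1}) of R^d (0-indexed, 0 beyond index d-1).\<close>
definition embed_pt :: "nat \<Rightarrow> real \<Rightarrow> real \<Rightarrow> (nat \<Rightarrow> real) \<Rightarrow> (nat \<Rightarrow> real)" where
  "embed_pt d \<Delta> \<epsilon> u = (\<lambda>i. if i = 0 then \<Delta> else if i < d then \<epsilon> * u (i - 1) else 0)"

end

theory Submission
  imports Defs
begin

lemma cos_lb: "1 - x^2/2 \<le> cos (x::real)"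
proof -
  have "cos x = cos (2 * (x/2))" by simp
  also have "\<dots> = 1 - 2 * (sin (x/2))\<^sup>2" by (rule cos_double_sin)
  finally have c: "cos x = 1 - 2 * (sin (x/2))\<^sup>2" .
  have "\<bar>sin (x/2)\<bar>^2 \<le> \<bar>x/2\<bar>^2"
    by (rule power_mono) (use abs_sin_x_le_abs_x[of "x/2"] in auto)
  then have "(sin (x/2))\<^sup>2 \<le> (x/2)^2" by (simp only: power2_abs)
  then show ?thesis using c by (simp add: power_divide)
qed

lemma sum_pm:
  assumes "u \<in> hypercube m" "v \<in> hypercube m"
  shows "(\<Sum>j<m. u j * v j) = real m - 2 * real (hamming m u v)"
proof -
  have "(\<Sum>j<m. u j * v j) = (\<Sum>j<m. 1 - 2 * (if u j \<noteq> v j then 1 else 0))"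
  proof (rule sum.cong)
    fix j assume "j \<in> {..<m}"
    then have "u j = 1 \<or> u j = -1" "v j = 1 \<or> v j = -1" using assms by (auto simp: hypercube_def)
    then show "u j * v j = 1 - 2 * (if u j \<noteq> v j then 1 else 0)" by auto
  qed simp
  also have "\<dots> = real m - 2 * (\<Sum>j<m. (if u j \<noteq> v j then 1 else 0))"
    by (simp add: sum_subtractf sum_distrib_left)
  also have "(\<Sum>j<m. (if u j \<noteq> v j then 1 else 0::real)) = real (card ({..<m} \<inter> {j. u j \<noteq> v j}))"
    by (simp add: sum.If_cases)
  also have "({..<m} \<inter> {j. u j \<noteq> v j}) = {j. j < m \<and> u j \<noteq> v j}" by auto
  finally show ?thesis by (simp add: hamming_def)
qed

lemma ham_le: "hamming m u v \<le> m"
proof -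
  have "card {j. j < m \<and> u j \<noteq> v j} \<le> card {..<m}" by (rule card_mono) auto
  then show ?thesis by (simp add: hamming_def)
qed

lemma inner_emb:
  assumes "d = Suc m"
  shows "inner_n d (embed_pt d D e u) (embed_pt d D e v) = D^2 + e^2 * (\<Sum>j<m. u j * v j)"
  unfolding inner_n_def embed_pt_def assms
  apply (subst sum.lessThan_Suc_shift)
  by (simp add: sum.lessThan_Suc_shift sum_distrib_left power2_eq_square algebra_simps)

lemma norm_emb:
  assumes "d = Suc m" "u \<in> hypercube m"
  shows "norm_n d (embed_pt d D e u) = sqrt (D^2 + e^2 * real m)"
proof -
  have "(\<Sum>j<m. u j * u j) = (\<Sum>j<m. 1)"
  proof (rule sum.cong)
    fix j assume "j \<in> {..<m}"
    then have "u j = 1 \<or> u j = -1" using assms by (auto simp: hypercube_def)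
    then show "u j * u j = 1" by auto
  qed simp
  then show ?thesis unfolding norm_n_def using inner_emb[OF assms(1)] by simp
qed

theorem lemma5:
  fixes d :: nat and \<epsilon> \<Delta> :: real and \<Gamma> :: "(nat \<Rightarrow> real) set"
  assumes "d \<ge> 7" and "\<epsilon> > 0" and "\<Delta> \<ge> sqrt (real d) * \<epsilon>"
    and "\<Gamma> \<subseteq> hypercube (d - 1)"
    and "\<And>x y. x \<in> \<Gamma> \<Longrightarrow> y \<in> \<Gamma> \<Longrightarrow> x \<noteq> y \<Longrightarrow> real (hamming (d - 1) x y) > real (d - 1) / 4"
  shows "\<forall>\<theta>\<in>embed_pt d \<Delta> \<epsilon> ` \<Gamma>. \<forall>\<theta>'\<in>embed_pt d \<Delta> \<epsilon> ` \<Gamma>. \<theta> \<noteq> \<theta>' \<longrightarrow>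
           sqrt (real d - 1) * \<epsilon> / (2 * \<Delta>) \<le> angle_n d \<theta> \<theta>' \<and> angle_n d \<theta> \<theta>' \<le> pi / 2"
proof (intro ballI impI)
  fix \<theta> \<theta>' assume th: "\<theta> \<in> embed_pt d \<Delta> \<epsilon> ` \<Gamma>" "\<theta>' \<in> embed_pt d \<Delta> \<epsilon> ` \<Gamma>" "\<theta> \<noteq> \<theta>'"
  then obtain u v where uv: "u \<in> \<Gamma>" "v \<in> \<Gamma>" "\<theta> = embed_pt d \<Delta> \<epsilon> u" "\<theta>' = embed_pt d \<Delta> \<epsilon> v"
    by auto
  with th have "u \<noteq> v" by auto
  define m where "m = d - 1"
  have dm: "d = Suc m" using assms(1) by (simp add: m_def)
  have rd: "real d = real m + 1" using dm by simp
  have hu: "u \<in> hypercube m" and hv: "v \<in> hypercube m" using uv assms(4) m_def by auto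
  define h where "h = hamming m u v"
  have hgt: "real h > real m / 4" using assms(5)[OF uv(1,2) \<open>u \<noteq> v\<close>] by (simp add: h_def m_def)
  have hle: "real h \<le> real m" using ham_le[of m u v] by (simp add: h_def)
  have sq: "\<Delta>^2 \<ge> real d * \<epsilon>^2"
  proof -
    have "0 \<le> sqrt (real d) * \<epsilon>" using assms(2) by simp
    then have "(sqrt (real d) * \<epsilon>)^2 \<le> \<Delta>^2" by (rule power_mono[OF assms(3)])
    then show ?thesis by (simp add: power_mult_distrib)
  qed
  have Dpos: "\<Delta> > 0"
  proof -
    have "sqrt (real d) * \<epsilon> > 0" using assms(1,2) by simp
    then show ?thesis using assms(3) by linarith
  qed
  define N where "N = \<Delta>^2 + \<epsilon>^2 * real m"
  have Npos: "N > 0" unfolding N_def using Dpos by (simp add: add_pos_nonneg)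
  have ang: "angle_n d \<theta> \<theta>' = arccos ((\<Delta>^2 + \<epsilon>^2 * (real m - 2 * real h)) / N)"
    unfolding angle_n_def uv(3,4) inner_emb[OF dm] norm_emb[OF dm hu] norm_emb[OF dm hv]
      sum_pm[OF hu hv] h_def N_def
    by (simp add: add_nonneg_nonneg)
  define c where "c = (\<Delta>^2 + \<epsilon>^2 * (real m - 2 * real h)) / N"
  have c_alt: "c = 1 - 2 * real h * \<epsilon>^2 / N"
    unfolding c_def using Npos by (simp add: field_simps N_def)
  have e2: "\<epsilon>^2 > 0" using assms(2) by simp
  have c0: "0 \<le> c"
  proof -
    have "\<epsilon>^2 * (2 * real h) \<le> \<epsilon>^2 * (2 * real m)" using hle e2 by simp
    moreover have "real m * \<epsilon>^2 \<le> real d * \<epsilon>^2" using rd e2 by simp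
    ultimately have "0 \<le> \<Delta>^2 + \<epsilon>^2 * (real m - 2 * real h)" using sq
      by (simp add: algebra_simps)
    then show ?thesis unfolding c_def using Npos by simp
  qed
  have c1: "c \<le> 1"
  proof -
    have "0 \<le> 2 * real h * \<epsilon>^2 / N" using Npos by simp
    then show ?thesis using c_alt by linarith
  qed
  define t where "t = sqrt (real d - 1) * \<epsilon> / (2 * \<Delta>)"
  have mD: "real m * \<epsilon>^2 \<le> \<Delta>^2"
  proof -
    have "real m * \<epsilon>^2 \<le> real d * \<epsilon>^2" using rd e2 by simp
    then show ?thesis using sq by linarith
  qed
  have t0: "0 \<le> t" unfolding t_def using assms(1,2) Dpos by simp
  have t2: "t^2 = real m * \<epsilon>^2 / (4 * \<Delta>^2)"
    unfolding t_def using rd by (simp add: power_divide power_mult_distrib)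
  have t2le: "t^2 \<le> 1"
  proof -
    have "real m * \<epsilon>^2 \<le> 4 * \<Delta>^2" using mD zero_le_power2[of \<Delta>] by linarith
    then show ?thesis unfolding t2 using Dpos by simp
  qed
  have tpi: "t \<le> pi"
  proof -
    have "t \<le> 1" using t2le t0 by (simp add: power_le_one_iff)
    then show ?thesis using pi_gt3 by linarith
  qed
  have key: "c \<le> 1 - t^2/2"
  proof -
    have A: "16 * real h * \<Delta>^2 \<ge> 4 * real m * \<Delta>^2" using hgt Dpos
      by (simp add: mult_right_mono)
    have B: "3 * real m * \<Delta>^2 \<ge> real m * real m * \<epsilon>^2"
    proof -
      have "3 * \<Delta>^2 \<ge> real m * \<epsilon>^2" using mD zero_le_power2[of \<Delta>] by linarith
      then show ?thesis by (metis mult.assoc mult_left_mono of_nat_0_le_iff mult.commute)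
    qed
    have "real m * \<epsilon>^2 * N \<le> 16 * real h * \<epsilon>^2 * \<Delta>^2"
    proof -
      have "real m * N \<le> 16 * real h * \<Delta>^2" using A B unfolding N_def
        by (simp add: algebra_simps)
      then have "\<epsilon>^2 * (real m * N) \<le> \<epsilon>^2 * (16 * real h * \<Delta>^2)" using e2 by simp
      then show ?thesis by (simp add: algebra_simps)
    qed
    then have "real m * \<epsilon>^2 / (8 * \<Delta>^2) \<le> 2 * real h * \<epsilon>^2 / N"
      using Npos Dpos by (simp add: divide_simps)
    then show ?thesis unfolding c_alt t2 by simp
  qed
  have "c \<le> cos t" using key cos_lb[of t] by linarith
  then have "arccos (cos t) \<le> arccos c"
    by (intro arccos_le_arccos) (use c0 in auto)
  moreover have "arccos (cos t) = t" using t0 tpi by (simp add: arccos_cos)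
  ultimately have "t \<le> arccos c" by simp
  moreover have "arccos c \<le> pi/2" using c0 c1 by (rule arccos_le_pi2)
  ultimately show "sqrt (real d - 1) * \<epsilon> / (2 * \<Delta>) \<le> angle_n d \<theta> \<theta>' \<and> angle_n d \<theta> \<theta>' \<le> pi / 2"
    unfolding ang c_def[symmetric] t_def[symmetric] by simp
qed

end
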